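(* Let $(E_1,E_2)$ be a matched pair of Courant algebroids, both of split signature, with connections $\nabla^{\to}$ ($E_1$-connection on $E_2$) and $\nabla^{\leftarrow}$ ($E_2$-connection on $E_1$), and let $D_1\subset E_1$, $D_2\subset E_2$ be Dirac structures. Then $D_1\oplus D_2$ is a Dirac structure in the matched sum $E_1\oplus E_2$ if and only if $\nabla^{\leftarrow}_\alpha a\in\Gamma(D_1)$ and $\nabla^{\to}_a\alpha\in\Gamma(D_2)$ for all $\alpha\in\Gamma(D_2)$ and $a\in\Gamma(D_1)$.
   Context: A Courant algebroid $(E,\langle\cdot,\cdot\rangle,\rho,\diamond)$: real vector bundle with symmetric nondegenerate fiberwise form, bracket and anchor satisfying (J) $\phi\diamond(\phi_1\diamond\phi_2)=\phi_1\diamond(\phi\diamond\phi_2)+(\phi\diamond\phi_1)\diamond\phi_2$, (L) $\phi\diamond(f\phi')=(\rho(\phi)f)\phi'+f(\phi\diamond\phi')$, (S) $\phi\diamond\phi=\tfrac12 D\langle\phi,\phi\rangle$, (I) $\rho(\phi)\langle\phi',\phi'\rangle=2\langle\phi\diamond\phi',\phi'\rangle$, with $\langle Df,\phi\rangle=\rho(\phi)f$. A Dirac structure in a Courant algebroid of split signature is a maximal isotropic subbundle $D$ with $\Gamma(D)\diamond\Gamma(D)\subset\Gamma(D)$. A matched pair $(E_1,E_2)$: metric-preserving connections $\nabla^{\to}$, $\nabla^{\leftarrow}$ with $\nabla^{\to}_{D_1f}=0$, $\nabla^{\leftarrow}_{D_2f}=0$ such that $E_1\oplus E_2$ with pairing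 $\langle a,b\rangle_1+\langle\alpha,\beta\rangle_2$, anchor $\rho_1(a)+\rho_2(\alpha)$ and bracket $(a\oplus\alpha)\diamond(b\oplus\beta)=(a\diamond_1b+\nabla^{\leftarrow}_\alpha b-\nabla^{\leftarrow}_\beta a+\mho(\alpha,\beta)+\tfrac12D_1\langle\alpha,\beta\rangle_2)\oplus(\alpha\diamond_2\beta+\nabla^{\to}_a\beta-\nabla^{\to}_b\alpha+\Omega(a,b)+\tfrac12D_2\langle a,b\rangle_1)$ is a Courant algebroid (the matched sum), where $\langle\gamma,\Omega(a,b)\rangle_2=\tfrac12(\langle\nabla^{\leftarrow}_\gamma a,b\rangle_1-\langle a,\nabla^{\leftarrow}_\gamma b\rangle_1)$ and $\langle c,\mho(\alpha,\beta)\rangle_1=\tfrac12(\langle\nabla^{\to}_c\alpha,\beta\rangle_2-\langle\alpha,\nabla^{\to}_c\beta\rangle_2)$. *)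

theory Defs
  imports "HOL-Analysis.Analysis"
begin

text \<open>
  The base manifold is a type 'm of points together with an algebra
  Fn of (smooth) real functions on it.  A vector bundle E is given by its set Sec of
  (smooth) sections, maps 'm => 'v into a finite-dimensional ambient space 'v
  (euclidean_space); the fibre over x is the set of values of sections at x.
\<close>

definition sadd :: "('m \<Rightarrow> 'v::real_vector) \<Rightarrow> ('m \<Rightarrow> 'v) \<Rightarrow> ('m \<Rightarrow> 'v)" where
  "sadd s t = (\<lambda>x. s x + t x)"

definition smul :: "('m \<Rightarrow> real) \<Rightarrow> ('m \<Rightarrow> 'v::real_vector) \<Rightarrow> ('m \<Rightarrow> 'v)" where
  "smul f s = (\<lambda>x. f x *\<^sub>R s x)"

definition szero :: "'m \<Rightarrow> 'v::real_vector" where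
  "szero = (\<lambda>x. 0)"

definition fconst :: "real \<Rightarrow> 'm \<Rightarrow> real" where
  "fconst c = (\<lambda>x. c)"

definition pr :: "('m \<Rightarrow> 'v \<Rightarrow> 'v \<Rightarrow> real) \<Rightarrow> ('m \<Rightarrow> 'v) \<Rightarrow> ('m \<Rightarrow> 'v) \<Rightarrow> ('m \<Rightarrow> real)" where
  "pr g s t = (\<lambda>x. g x (s x) (t x))"

definition Fib :: "('m \<Rightarrow> 'v) set \<Rightarrow> 'm \<Rightarrow> 'v set" where
  "Fib Sec x = (\<lambda>s. s x) ` Sec"

definition function_algebra :: "('m \<Rightarrow> real) set \<Rightarrow> bool" where
  "function_algebra Fn \<longleftrightarrow>
     (\<forall>c. fconst c \<in> Fn) \<and>
     (\<forall>f\<in>Fn. \<forall>h\<in>Fn. (\<lambda>x. f x + h x) \<in> Fn \<and> (\<lambda>x. f x * h x) \<in> Fn)"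

definition section_module :: "('m \<Rightarrow> real) set \<Rightarrow> ('m \<Rightarrow> 'v::euclidean_space) set \<Rightarrow> bool" where
  "section_module Fn Sec \<longleftrightarrow>
     szero \<in> Sec \<and>
     (\<forall>s\<in>Sec. \<forall>t\<in>Sec. sadd s t \<in> Sec) \<and>
     (\<forall>f\<in>Fn. \<forall>s\<in>Sec. smul f s \<in> Sec)"

definition fibre_metric ::
  "('m \<Rightarrow> real) set \<Rightarrow> ('m \<Rightarrow> 'v::euclidean_space) set \<Rightarrow> ('m \<Rightarrow> 'v \<Rightarrow> 'v \<Rightarrow> real) \<Rightarrow> bool" where
  "fibre_metric Fn Sec g \<longleftrightarrow>
     (\<forall>s\<in>Sec. \<forall>t\<in>Sec. pr g s t \<in> Fn) \<and>
     (\<forall>x. \<forall>u\<in>Fib Sec x. \<forall>v\<in>Fib Sec x. g x u v = g x v u) \<and>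
     (\<forall>x. \<forall>u\<in>Fib Sec x. \<forall>v\<in>Fib Sec x. \<forall>w\<in>Fib Sec x. \<forall>c::real.
          g x (u + v) w = g x u w + g x v w \<and> g x (c *\<^sub>R u) w = c * g x u w) \<and>
     (\<forall>x. \<forall>u\<in>Fib Sec x. (\<forall>v\<in>Fib Sec x. g x u v = 0) \<longrightarrow> u = 0)"

definition split_signature :: "('m \<Rightarrow> 'v::euclidean_space) set \<Rightarrow> ('m \<Rightarrow> 'v \<Rightarrow> 'v \<Rightarrow> real) \<Rightarrow> bool" where
  "split_signature Sec g \<longleftrightarrow>
     (\<forall>x. \<exists>P N. subspace P \<and> subspace N \<and> P \<subseteq> Fib Sec x \<and> N \<subseteq> Fib Sec x \<and>
        Fib Sec x = {p + n | p n. p \<in> P \<and> n \<in> N} \<and>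
        (\<forall>p\<in>P. p \<noteq> 0 \<longrightarrow> g x p p > 0) \<and>
        (\<forall>n\<in>N. n \<noteq> 0 \<longrightarrow> g x n n < 0) \<and>
        (\<forall>p\<in>P. \<forall>n\<in>N. g x p n = 0) \<and>
        dim P = dim N)"

definition courant_algebroid ::
  "('m \<Rightarrow> real) set \<Rightarrow> ('m \<Rightarrow> 'v::euclidean_space) set \<Rightarrow> ('m \<Rightarrow> 'v \<Rightarrow> 'v \<Rightarrow> real) \<Rightarrow>
   (('m \<Rightarrow> 'v) \<Rightarrow> ('m \<Rightarrow> real) \<Rightarrow> ('m \<Rightarrow> real)) \<Rightarrow>
   (('m \<Rightarrow> 'v) \<Rightarrow> ('m \<Rightarrow> 'v) \<Rightarrow> ('m \<Rightarrow> 'v)) \<Rightarrow>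
   (('m \<Rightarrow> real) \<Rightarrow> ('m \<Rightarrow> 'v)) \<Rightarrow> bool" where
  "courant_algebroid Fn Sec g rho br Dop \<longleftrightarrow>
     function_algebra Fn \<and> section_module Fn Sec \<and> fibre_metric Fn Sec g \<and>
     \<comment> \<open>anchor: a C-linear map from sections to derivations (vector fields)\<close>
     (\<forall>\<phi>\<in>Sec. \<forall>f\<in>Fn. rho \<phi> f \<in> Fn) \<and>
     (\<forall>\<phi>\<in>Sec. \<forall>c. rho \<phi> (fconst c) = fconst 0) \<and>
     (\<forall>\<phi>\<in>Sec. \<forall>f\<in>Fn. \<forall>h\<in>Fn.
        rho \<phi> (\<lambda>x. f x + h x) = (\<lambda>x. rho \<phi> f x + rho \<phi> h x) \<and>
        rho \<phi> (\<lambda>x. f x * h x) = (\<lambda>x. f x * rho \<phi> h x + h x * rho \<phi> f x)) \<and>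
     (\<forall>\<phi>\<in>Sec. \<forall>\<psi>\<in>Sec. \<forall>f\<in>Fn. rho (sadd \<phi> \<psi>) f = (\<lambda>x. rho \<phi> f x + rho \<psi> f x)) \<and>
     (\<forall>\<phi>\<in>Sec. \<forall>h\<in>Fn. \<forall>f\<in>Fn. rho (smul h \<phi>) f = (\<lambda>x. h x * rho \<phi> f x)) \<and>
     \<comment> \<open>bracket: R-bilinear on sections\<close>
     (\<forall>\<phi>\<in>Sec. \<forall>\<psi>\<in>Sec. br \<phi> \<psi> \<in> Sec) \<and>
     (\<forall>\<phi>\<in>Sec. \<forall>\<psi>\<in>Sec. \<forall>\<theta>\<in>Sec.
        br (sadd \<phi> \<psi>) \<theta> = sadd (br \<phi> \<theta>) (br \<psi> \<theta>) \<and>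
        br \<theta> (sadd \<phi> \<psi>) = sadd (br \<theta> \<phi>) (br \<theta> \<psi>)) \<and>
     (\<forall>\<phi>\<in>Sec. \<forall>\<psi>\<in>Sec. \<forall>c.
        br (smul (fconst c) \<phi>) \<psi> = smul (fconst c) (br \<phi> \<psi>) \<and>
        br \<phi> (smul (fconst c) \<psi>) = smul (fconst c) (br \<phi> \<psi>)) \<and>
     \<comment> \<open>the operator D\<close>
     (\<forall>f\<in>Fn. Dop f \<in> Sec \<and> (\<forall>\<phi>\<in>Sec. pr g (Dop f) \<phi> = rho \<phi> f)) \<and>
     \<comment> \<open>(J)\<close>
     (\<forall>\<phi>\<in>Sec. \<forall>\<phi>1\<in>Sec. \<forall>\<phi>2\<in>Sec.
        br \<phi> (br \<phi>1 \<phi>2) = sadd (br \<phi>1 (br \<phi> \<phi>2)) (br (br \<phi> \<phi>1) \<phi>2)) \<and>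
     \<comment> \<open>(L)\<close>
     (\<forall>\<phi>\<in>Sec. \<forall>\<phi>'\<in>Sec. \<forall>f\<in>Fn.
        br \<phi> (smul f \<phi>') = sadd (smul (rho \<phi> f) \<phi>') (smul f (br \<phi> \<phi>'))) \<and>
     \<comment> \<open>(S)\<close>
     (\<forall>\<phi>\<in>Sec. br \<phi> \<phi> = smul (fconst (1/2)) (Dop (pr g \<phi> \<phi>))) \<and>
     \<comment> \<open>(I)\<close>
     (\<forall>\<phi>\<in>Sec. \<forall>\<phi>'\<in>Sec.
        rho \<phi> (pr g \<phi>' \<phi>') = (\<lambda>x. 2 * pr g (br \<phi> \<phi>') \<phi>' x))"

definition Gam :: "('m \<Rightarrow> 'v) set \<Rightarrow> ('m \<Rightarrow> 'v set) \<Rightarrow> ('m \<Rightarrow> 'v) set" where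
  "Gam Sec D = {s \<in> Sec. \<forall>x. s x \<in> D x}"

definition isotropic_at :: "('m \<Rightarrow> 'v \<Rightarrow> 'v \<Rightarrow> real) \<Rightarrow> 'm \<Rightarrow> 'v set \<Rightarrow> bool" where
  "isotropic_at g x W \<longleftrightarrow> (\<forall>u\<in>W. \<forall>v\<in>W. g x u v = 0)"

definition dirac_structure ::
  "('m \<Rightarrow> 'v::euclidean_space) set \<Rightarrow> ('m \<Rightarrow> 'v \<Rightarrow> 'v \<Rightarrow> real) \<Rightarrow>
   (('m \<Rightarrow> 'v) \<Rightarrow> ('m \<Rightarrow> 'v) \<Rightarrow> ('m \<Rightarrow> 'v)) \<Rightarrow> ('m \<Rightarrow> 'v set) \<Rightarrow> bool" where
  "dirac_structure Sec g br D \<longleftrightarrow>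
     (\<forall>x. subspace (D x) \<and> D x \<subseteq> Fib Sec x) \<and>
     (\<forall>x. \<forall>v\<in>D x. \<exists>s\<in>Gam Sec D. s x = v) \<and>
     (\<forall>x. isotropic_at g x (D x) \<and>
          (\<forall>W. subspace W \<and> D x \<subseteq> W \<and> W \<subseteq> Fib Sec x \<and> isotropic_at g x W \<longrightarrow> W = D x)) \<and>
     (\<forall>s\<in>Gam Sec D. \<forall>t\<in>Gam Sec D. br s t \<in> Gam Sec D)"

definition metric_connection ::
  "('m \<Rightarrow> real) set \<Rightarrow> ('m \<Rightarrow> 'v::euclidean_space) set \<Rightarrow>
   (('m \<Rightarrow> 'v) \<Rightarrow> ('m \<Rightarrow> real) \<Rightarrow> ('m \<Rightarrow> real)) \<Rightarrow> (('m \<Rightarrow> real) \<Rightarrow> ('m \<Rightarrow> 'v)) \<Rightarrow>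
   ('m \<Rightarrow> 'w::euclidean_space) set \<Rightarrow> ('m \<Rightarrow> 'w \<Rightarrow> 'w \<Rightarrow> real) \<Rightarrow>
   (('m \<Rightarrow> 'v) \<Rightarrow> ('m \<Rightarrow> 'w) \<Rightarrow> ('m \<Rightarrow> 'w)) \<Rightarrow> bool" where
  "metric_connection Fn Sec1 rho1 Dop1 Sec2 g2 nab \<longleftrightarrow>
     (\<forall>a\<in>Sec1. \<forall>\<alpha>\<in>Sec2. nab a \<alpha> \<in> Sec2) \<and>
     (\<forall>a\<in>Sec1. \<forall>b\<in>Sec1. \<forall>\<alpha>\<in>Sec2. nab (sadd a b) \<alpha> = sadd (nab a \<alpha>) (nab b \<alpha>)) \<and>
     (\<forall>a\<in>Sec1. \<forall>f\<in>Fn. \<forall>\<alpha>\<in>Sec2. nab (smul f a) \<alpha> = smul f (nab a \<alpha>)) \<and>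
     (\<forall>a\<in>Sec1. \<forall>\<alpha>\<in>Sec2. \<forall>\<beta>\<in>Sec2. nab a (sadd \<alpha> \<beta>) = sadd (nab a \<alpha>) (nab a \<beta>)) \<and>
     (\<forall>a\<in>Sec1. \<forall>f\<in>Fn. \<forall>\<alpha>\<in>Sec2.
        nab a (smul f \<alpha>) = sadd (smul (rho1 a f) \<alpha>) (smul f (nab a \<alpha>))) \<and>
     (\<forall>a\<in>Sec1. \<forall>\<alpha>\<in>Sec2. \<forall>\<beta>\<in>Sec2.
        rho1 a (pr g2 \<alpha> \<beta>) = (\<lambda>x. pr g2 (nab a \<alpha>) \<beta> x + pr g2 \<alpha> (nab a \<beta>) x)) \<and>
     (\<forall>f\<in>Fn. \<forall>\<alpha>\<in>Sec2. nab (Dop1 f) \<alpha> = szero)"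

definition curv_form ::
  "('m \<Rightarrow> 'v::euclidean_space) set \<Rightarrow> ('m \<Rightarrow> 'v \<Rightarrow> 'v \<Rightarrow> real) \<Rightarrow>
   ('m \<Rightarrow> 'w::euclidean_space) set \<Rightarrow> ('m \<Rightarrow> 'w \<Rightarrow> 'w \<Rightarrow> real) \<Rightarrow>
   (('m \<Rightarrow> 'w) \<Rightarrow> ('m \<Rightarrow> 'v) \<Rightarrow> ('m \<Rightarrow> 'v)) \<Rightarrow>
   (('m \<Rightarrow> 'v) \<Rightarrow> ('m \<Rightarrow> 'v) \<Rightarrow> ('m \<Rightarrow> 'w)) \<Rightarrow> bool" where
  "curv_form Sec1 g1 Sec2 g2 nabL Om \<longleftrightarrow>
     (\<forall>a\<in>Sec1. \<forall>b\<in>Sec1. Om a b \<in> Sec2 \<and>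
        (\<forall>\<gamma>\<in>Sec2. pr g2 \<gamma> (Om a b) =
           (\<lambda>x. (1/2) * (pr g1 (nabL \<gamma> a) b x - pr g1 a (nabL \<gamma> b) x))))"

definition sfst :: "('m \<Rightarrow> 'v \<times> 'w) \<Rightarrow> ('m \<Rightarrow> 'v)" where
  "sfst s = (\<lambda>x. fst (s x))"
definition ssnd :: "('m \<Rightarrow> 'v \<times> 'w) \<Rightarrow> ('m \<Rightarrow> 'w)" where
  "ssnd s = (\<lambda>x. snd (s x))"

definition msum_sec :: "('m \<Rightarrow> 'v) set \<Rightarrow> ('m \<Rightarrow> 'w) set \<Rightarrow> ('m \<Rightarrow> 'v \<times> 'w) set" where
  "msum_sec Sec1 Sec2 = {s. sfst s \<in> Sec1 \<and> ssnd s \<in> Sec2}"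

definition msum_g :: "('m \<Rightarrow> 'v \<Rightarrow> 'v \<Rightarrow> real) \<Rightarrow> ('m \<Rightarrow> 'w \<Rightarrow> 'w \<Rightarrow> real) \<Rightarrow>
    'm \<Rightarrow> 'v \<times> 'w \<Rightarrow> 'v \<times> 'w \<Rightarrow> real" where
  "msum_g g1 g2 x u w = g1 x (fst u) (fst w) + g2 x (snd u) (snd w)"

definition msum_rho ::
  "(('m \<Rightarrow> 'v) \<Rightarrow> ('m \<Rightarrow> real) \<Rightarrow> ('m \<Rightarrow> real)) \<Rightarrow> (('m \<Rightarrow> 'w) \<Rightarrow> ('m \<Rightarrow> real) \<Rightarrow> ('m \<Rightarrow> real)) \<Rightarrow>
   ('m \<Rightarrow> 'v \<times> 'w) \<Rightarrow> ('m \<Rightarrow> real) \<Rightarrow> ('m \<Rightarrow> real)" where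
  "msum_rho rho1 rho2 s f = (\<lambda>x. rho1 (sfst s) f x + rho2 (ssnd s) f x)"

definition msum_D ::
  "(('m \<Rightarrow> real) \<Rightarrow> ('m \<Rightarrow> 'v)) \<Rightarrow> (('m \<Rightarrow> real) \<Rightarrow> ('m \<Rightarrow> 'w)) \<Rightarrow> ('m \<Rightarrow> real) \<Rightarrow> ('m \<Rightarrow> 'v \<times> 'w)" where
  "msum_D Dop1 Dop2 f = (\<lambda>x. (Dop1 f x, Dop2 f x))"

definition msum_br ::
  "('m \<Rightarrow> 'v::real_vector \<Rightarrow> 'v \<Rightarrow> real) \<Rightarrow> (('m \<Rightarrow> 'v) \<Rightarrow> ('m \<Rightarrow> 'v) \<Rightarrow> ('m \<Rightarrow> 'v)) \<Rightarrow>
   (('m \<Rightarrow> real) \<Rightarrow> ('m \<Rightarrow> 'v)) \<Rightarrow>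
   ('m \<Rightarrow> 'w::real_vector \<Rightarrow> 'w \<Rightarrow> real) \<Rightarrow> (('m \<Rightarrow> 'w) \<Rightarrow> ('m \<Rightarrow> 'w) \<Rightarrow> ('m \<Rightarrow> 'w)) \<Rightarrow>
   (('m \<Rightarrow> real) \<Rightarrow> ('m \<Rightarrow> 'w)) \<Rightarrow>
   (('m \<Rightarrow> 'v) \<Rightarrow> ('m \<Rightarrow> 'w) \<Rightarrow> ('m \<Rightarrow> 'w)) \<Rightarrow>
   (('m \<Rightarrow> 'w) \<Rightarrow> ('m \<Rightarrow> 'v) \<Rightarrow> ('m \<Rightarrow> 'v)) \<Rightarrow>
   (('m \<Rightarrow> 'v) \<Rightarrow> ('m \<Rightarrow> 'v) \<Rightarrow> ('m \<Rightarrow> 'w)) \<Rightarrow>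
   (('m \<Rightarrow> 'w) \<Rightarrow> ('m \<Rightarrow> 'w) \<Rightarrow> ('m \<Rightarrow> 'v)) \<Rightarrow>
   ('m \<Rightarrow> 'v \<times> 'w) \<Rightarrow> ('m \<Rightarrow> 'v \<times> 'w) \<Rightarrow> ('m \<Rightarrow> 'v \<times> 'w)" where
  "msum_br g1 br1 Dop1 g2 br2 Dop2 nabR nabL Om Mh s t =
     (let a = sfst s; \<alpha> = ssnd s; b = sfst t; \<beta> = ssnd t in
      (\<lambda>x. (br1 a b x + nabL \<alpha> b x - nabL \<beta> a x + Mh \<alpha> \<beta> x
               + (1/2) *\<^sub>R Dop1 (pr g2 \<alpha> \<beta>) x,
             br2 \<alpha> \<beta> x + nabR a \<beta> x - nabR b \<alpha> x + Om a b x
               + (1/2) *\<^sub>R Dop2 (pr g1 a b) x)))"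

definition matched_pair where
  "matched_pair Fn Sec1 g1 rho1 br1 Dop1 Sec2 g2 rho2 br2 Dop2 nabR nabL Om Mh \<longleftrightarrow>
     courant_algebroid Fn Sec1 g1 rho1 br1 Dop1 \<and>
     courant_algebroid Fn Sec2 g2 rho2 br2 Dop2 \<and>
     metric_connection Fn Sec1 rho1 Dop1 Sec2 g2 nabR \<and>
     metric_connection Fn Sec2 rho2 Dop2 Sec1 g1 nabL \<and>
     curv_form Sec1 g1 Sec2 g2 nabL Om \<and>
     curv_form Sec2 g2 Sec1 g1 nabR Mh \<and>
     courant_algebroid Fn (msum_sec Sec1 Sec2) (msum_g g1 g2) (msum_rho rho1 rho2)
        (msum_br g1 br1 Dop1 g2 br2 Dop2 nabR nabL Om Mh) (msum_D Dop1 Dop2)"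

end

theory Submission
  imports Defs
begin


definition bilin_on :: "'v::real_vector set \<Rightarrow> ('v\<Rightarrow>'v\<Rightarrow>real) \<Rightarrow> bool" where
 "bilin_on F G \<longleftrightarrow> (\<forall>u\<in>F. \<forall>v\<in>F. G u v = G v u) \<and>
   (\<forall>u\<in>F. \<forall>v\<in>F. \<forall>w\<in>F. \<forall>c. G (u+v) w = G u w + G v w \<and> G (c *\<^sub>R u) w = c * G u w)"

lemma bl_sym: "bilin_on F G \<Longrightarrow> u\<in>F \<Longrightarrow> v\<in>F \<Longrightarrow> G u v = G v u"
  unfolding bilin_on_def by blast
lemma bl_add1: "bilin_on F G \<Longrightarrow> u\<in>F \<Longrightarrow> v\<in>F \<Longrightarrow> w\<in>F \<Longrightarrow> G (u+v) w = G u w + G v w"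
  unfolding bilin_on_def by blast
lemma bl_scale1: "bilin_on F G \<Longrightarrow> u\<in>F \<Longrightarrow> w\<in>F \<Longrightarrow> G (c *\<^sub>R u) w = c * G u w"
  unfolding bilin_on_def by blast
lemma bl_add2: "bilin_on F G \<Longrightarrow> subspace F \<Longrightarrow> u\<in>F \<Longrightarrow> v\<in>F \<Longrightarrow> w\<in>F \<Longrightarrow> G w (u+v) = G w u + G w v"
  by (metis bl_add1 bl_sym subspace_add)
lemma bl_scale2: "bilin_on F G \<Longrightarrow> subspace F \<Longrightarrow> u\<in>F \<Longrightarrow> w\<in>F \<Longrightarrow> G w (c *\<^sub>R u) = c * G w u"
  by (metis bl_scale1 bl_sym subspace_scale)
lemma bl_zero1: "bilin_on F G \<Longrightarrow> subspace F \<Longrightarrow> w\<in>F \<Longrightarrow> G 0 w = 0"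
  by (metis bl_scale1 scale_zero_left subspace_0 mult_zero_left)
lemma bl_zero2: "bilin_on F G \<Longrightarrow> subspace F \<Longrightarrow> w\<in>F \<Longrightarrow> G w 0 = 0"
  by (metis bl_zero1 bl_sym subspace_0)

lemma bl_neg: "bilin_on F G \<Longrightarrow> bilin_on F (\<lambda>a b. - G a b)"
  unfolding bilin_on_def by auto

lemma exists_common_zero:
  fixes N :: "'v::euclidean_space set" and f :: "'l \<Rightarrow> 'v \<Rightarrow> real"
  assumes "finite B" "subspace N" "card B < dim N"
    "\<forall>l\<in>B. \<forall>u\<in>N. \<forall>v\<in>N. \<forall>c. f l (u+v) = f l u + f l v \<and> f l (c*\<^sub>R u) = c * f l u"
  shows "\<exists>n\<in>N. n \<noteq> 0 \<and> (\<forall>l\<in>B. f l n = 0)"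
  using assms
proof (induction B arbitrary: N rule: finite_induct)
  case empty
  then have "\<not> N \<subseteq> {0}" using dim_eq_0 by (metis less_numeral_extra(3) card.empty)
  then show ?case by auto
next
  case (insert l B)
  define N' where "N' = {n\<in>N. f l n = 0}"
  have lin: "\<forall>u\<in>N. \<forall>v\<in>N. \<forall>c. f l (u+v) = f l u + f l v \<and> f l (c*\<^sub>R u) = c * f l u"
    using insert.prems by simp
  have f0: "f l 0 = 0" using lin subspace_0[OF insert.prems(1)]
    by (metis mult_zero_left scale_zero_left)
  have sN': "subspace N'" unfolding subspace_def N'_def
    using insert.prems(1) lin f0 by (auto simp: subspace_add subspace_scale subspace_0)
  have "dim N \<le> dim N' + 1"
  proof (cases "\<forall>n\<in>N. f l n = 0")
    case True then have "N' = N" unfolding N'_def by auto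
    then show ?thesis by simp
  next
    case False
    then obtain n0 where n0: "n0 \<in> N" "f l n0 \<noteq> 0" by auto
    have "N \<subseteq> span (insert n0 N')"
    proof
      fix n assume n: "n \<in> N"
      define k where "k = f l n / f l n0"
      have "n - k *\<^sub>R n0 \<in> N'"
      proof -
        have m: "n - k *\<^sub>R n0 = n + (-k) *\<^sub>R n0" by simp
        have "(-k) *\<^sub>R n0 \<in> N" using n0 insert.prems(1) subspace_scale by blast
        then have "f l (n + (-k) *\<^sub>R n0) = f l n + f l ((-k) *\<^sub>R n0)" using lin n by blast
        also have "f l ((-k) *\<^sub>R n0) = (-k) * f l n0" using lin n0 by blast
        finally have "f l (n + (-k) *\<^sub>R n0) = f l n + (-k) * f l n0" .
        also have "\<dots> = 0" using n0(2) by (simp add: k_def)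
        finally have "f l (n - k *\<^sub>R n0) = 0" by (subst m)
        moreover have "n - k *\<^sub>R n0 \<in> N" using n n0 insert.prems(1) subspace_diff subspace_scale by blast
        ultimately show ?thesis unfolding N'_def by blast
      qed
      then have "n - k *\<^sub>R n0 \<in> span N'" by (simp add: span_base)
      then show "n \<in> span (insert n0 N')" using span_breakdown_eq by blast
    qed
    then have "dim N \<le> dim (insert n0 N')" by (metis dim_span dim_subset)
    also have "\<dots> \<le> dim N' + 1" by (simp add: dim_insert)
    finally show ?thesis .
  qed
  then have "card B < dim N'" using insert.prems(2) insert.hyps by simp
  moreover have "\<forall>l\<in>B. \<forall>u\<in>N'. \<forall>v\<in>N'. \<forall>c. f l (u+v) = f l u + f l v \<and> f l (c*\<^sub>R u) = c * f l u"
    using insert.prems(3) unfolding N'_def by auto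
  ultimately obtain n where "n \<in> N'" "n \<noteq> 0" "\<forall>l\<in>B. f l n = 0"
    using insert.IH sN' by blast
  then show ?case unfolding N'_def by auto
qed

lemma iso_ext:
  fixes G :: "'v::euclidean_space \<Rightarrow> 'v \<Rightarrow> real"
  assumes F: "subspace F" and bl: "bilin_on F G"
    and L: "subspace L" "L \<subseteq> F" "\<forall>a\<in>L. \<forall>b\<in>L. G a b = 0"
    and w: "w \<in> F" "\<forall>l\<in>L. G l w = 0" "G w w = 0"
  shows "\<forall>a\<in>span (insert w L). \<forall>b\<in>span (insert w L). G a b = 0"
proof (intro ballI)
  fix a b assume a: "a \<in> span (insert w L)" and b: "b \<in> span (insert w L)"
  obtain k1 where k1: "a - k1 *\<^sub>R w \<in> L" using a span_breakdown_eq L(1) by (metis span_eq_iff)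
  obtain k2 where k2: "b - k2 *\<^sub>R w \<in> L" using b span_breakdown_eq L(1) by (metis span_eq_iff)
  define l1 where "l1 = a - k1 *\<^sub>R w"
  define l2 where "l2 = b - k2 *\<^sub>R w"
  have l1F: "l1 \<in> F" and l2F: "l2 \<in> F" using k1 k2 L(2) l1_def l2_def by auto
  have kw1: "k1 *\<^sub>R w \<in> F" and kw2: "k2 *\<^sub>R w \<in> F" using w F by (auto simp: subspace_scale)
  have ae: "a = l1 + k1 *\<^sub>R w" and be: "b = l2 + k2 *\<^sub>R w" by (simp_all add: l1_def l2_def)
  have "G a b = G l1 l2 + G l1 (k2 *\<^sub>R w) + (G (k1 *\<^sub>R w) l2 + G (k1 *\<^sub>R w) (k2 *\<^sub>R w))"
    unfolding ae be using bl F l1F l2F kw1 kw2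
    by (simp add: bl_add1 bl_add2 subspace_add)
  also have "\<dots> = 0"
    using bl F l1F l2F w k1 k2 L
    by (simp add: bl_scale1 bl_scale2 subspace_scale l1_def[symmetric] l2_def[symmetric] bl_sym[of F G w l2])
  finally show "G a b = 0" .
qed

lemma iso_ext_mem:
  fixes G :: "'v::euclidean_space \<Rightarrow> 'v \<Rightarrow> real"
  assumes F: "subspace F" and bl: "bilin_on F G"
    and L: "subspace L" "L \<subseteq> F" "\<forall>a\<in>L. \<forall>b\<in>L. G a b = 0"
    and max: "\<forall>W. subspace W \<and> L \<subseteq> W \<and> W \<subseteq> F \<and> (\<forall>a\<in>W. \<forall>b\<in>W. G a b = 0) \<longrightarrow> W = L"
    and w: "w \<in> F" "\<forall>l\<in>L. G l w = 0" "G w w = 0"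
  shows "w \<in> L"
proof -
  have "span (insert w L) \<subseteq> F" using w L F by (metis insert_subset span_eq_iff span_mono)
  moreover have "L \<subseteq> span (insert w L)" by (meson span_superset subset_insertI subset_trans)
  ultimately have "span (insert w L) = L" using max iso_ext[OF F bl L w] subspace_span by blast
  then show ?thesis by (metis insertI1 span_superset subsetD)
qed

lemma quad_root:
  fixes a b c :: real assumes "a > 0" "c < 0"
  shows "\<exists>t. a + 2*b*t + c*t^2 = 0"
proof -
  define d where "d = sqrt (b^2 - a*c)"
  have dpos: "b^2 - a*c \<ge> 0" using assms by (smt (verit) mult_pos_neg zero_le_power2)
  have dd: "d^2 = b^2 - a*c" using dpos d_def by simp
  define t where "t = (-b - d)/c"
  have "c*t^2 = (b + d)^2 / c" using assms by (simp add: t_def power2_eq_square field_simps)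
  have "c * (a + 2*b*t + c*t^2) = c*a + 2*b*(-b-d) + (b+d)^2"
    using assms by (simp add: t_def power2_eq_square field_simps)
  also have "\<dots> = c*a - b^2 + d^2" by (simp add: power2_eq_square algebra_simps)
  also have "\<dots> = 0" using dd by simp
  finally show ?thesis using assms by auto
qed

lemma maxiso_core:
  fixes G :: "'v::euclidean_space \<Rightarrow> 'v \<Rightarrow> real"
  assumes F: "subspace F" and bl: "bilin_on F G"
    and P: "subspace P" "P \<subseteq> F" and N: "subspace N" "N \<subseteq> F"
    and FPN: "F = {p + n |p n. p \<in> P \<and> n \<in> N}"
    and negN: "\<forall>n\<in>N. n \<noteq> 0 \<longrightarrow> G n n < 0" and dimPN: "dim P = dim N"
    and L: "subspace L" "L \<subseteq> F" "\<forall>a\<in>L. \<forall>b\<in>L. G a b = 0"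
    and max: "\<forall>W. subspace W \<and> L \<subseteq> W \<and> W \<subseteq> F \<and> (\<forall>a\<in>W. \<forall>b\<in>W. G a b = 0) \<longrightarrow> W = L"
    and u: "u \<in> F" "\<forall>l\<in>L. G l u = 0" "G u u > 0"
  shows False
proof -
  have uL: "u \<notin> L" using u L by force
  define M where "M = span (insert u L)"
  have sM: "subspace M" unfolding M_def by simp
  have MF: "M \<subseteq> F" unfolding M_def using u L F by (metis insert_subset span_eq_iff span_mono)
  have dimM: "dim M = dim L + 1" unfolding M_def using uL L(1) by (simp add: dim_insert span_eq_iff[THEN iffD2])
  have MN: "M \<inter> N \<subseteq> {0}"
  proof
    fix m assume m: "m \<in> M \<inter> N"
    obtain k where k: "m - k *\<^sub>R u \<in> L" using m span_breakdown_eq L(1) unfolding M_def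
      by (metis IntD1 span_eq_iff)
    define l where "l = m - k *\<^sub>R u"
    have lF: "l \<in> F" using k L l_def by auto
    have kuF: "k *\<^sub>R u \<in> F" using u F by (simp add: subspace_scale)
    have me: "m = l + k *\<^sub>R u" by (simp add: l_def)
    have "G m m = G l l + G l (k *\<^sub>R u) + (G (k *\<^sub>R u) l + G (k *\<^sub>R u) (k *\<^sub>R u))"
      unfolding me using bl F lF kuF by (simp add: bl_add1 bl_add2 subspace_add)
    also have "\<dots> = k * (k * G u u)"
      using bl F lF u k L by (simp add: bl_scale1 bl_scale2 subspace_scale l_def[symmetric] bl_sym[of F G u l])
    finally have "G m m \<ge> 0" using u(3) by (simp add: mult.assoc[symmetric])
    then show "m \<in> {0}" using negN m by force
  qed
  have "dim {x + y |x y. x \<in> M \<and> y \<in> N} + dim (M \<inter> N) = dim M + dim N"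
    using dim_sums_Int[OF sM N(1)] .
  moreover have "dim (M \<inter> N) = 0" using MN by simp
  moreover have "{x + y |x y. x \<in> M \<and> y \<in> N} \<subseteq> F" using MF N F subspace_add by blast
  then have "dim {x + y |x y. x \<in> M \<and> y \<in> N} \<le> dim F" by (rule dim_subset)
  moreover have "dim F + dim (P \<inter> N) = dim P + dim N" using dim_sums_Int[OF P(1) N(1)] FPN by simp
  ultimately have ltN: "dim L < dim N" using dimM dimPN by linarith
  obtain B where B: "B \<subseteq> L" "independent B" "L \<subseteq> span B" "card B = dim L" by (rule basis_exists)
  have finB: "finite B" using B(2) by (rule finiteI_independent)
  have "\<forall>l\<in>B. \<forall>x\<in>N. \<forall>y\<in>N. \<forall>c. G l (x+y) = G l x + G l y \<and> G l (c*\<^sub>R x) = c * G l x"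
    using B(1) L(2) N(2) bl F by (meson bl_add2 bl_scale2 subsetD)
  then obtain n where n: "n \<in> N" "n \<noteq> 0" "\<forall>l\<in>B. G l n = 0"
    using exists_common_zero[OF finB N(1), of G] B(4) ltN by auto
  have nF: "n \<in> F" using n N by auto
  have sS: "subspace {l \<in> F. G l n = 0}" unfolding subspace_def
    using F bl nF by (auto simp: subspace_0 subspace_add subspace_scale bl_zero1 bl_add1 bl_scale1)
  have "span B \<subseteq> {l \<in> F. G l n = 0}" using span_minimal[OF _ sS] B(1) L(2) n(3) by auto
  then have nperp: "\<forall>l\<in>L. G l n = 0" using B(3) by auto
  have gnn: "G n n < 0" using negN n by auto
  obtain t where t: "G u u + 2 * G u n * t + G n n * t^2 = 0" using quad_root[OF u(3) gnn] by blast
  define w where "w = u + t *\<^sub>R n"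
  have tnF: "t *\<^sub>R n \<in> F" using nF F by (simp add: subspace_scale)
  have wF: "w \<in> F" unfolding w_def using u tnF F by (simp add: subspace_add)
  have wperp: "\<forall>l\<in>L. G l w = 0"
    using u nperp bl F L nF tnF by (auto simp: w_def bl_add2 bl_scale2)
  have Gwn: "G w n = G u n + t * G n n"
    unfolding w_def using bl F u nF tnF by (simp add: bl_add1 bl_scale1)
  have Gnu: "G n u = G u n" using bl u nF by (simp add: bl_sym)
  have "G w w = G u u + t * G n u + (t * G u n + t * (t * G n n))"
    unfolding w_def using bl F u nF tnF by (simp add: bl_add1 bl_add2 bl_scale1 bl_scale2 subspace_add)
  also have "\<dots> = 0" using t Gnu by (simp add: power2_eq_square algebra_simps)
  finally have Gww: "G w w = 0" .
  have "w \<in> L" using iso_ext_mem[OF F bl L max wF wperp Gww] .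
  then have "G w n = 0" using nperp by auto
  then have "G u n = - t * G n n" using Gwn by simp
  then have "G u u = t^2 * G n n" using t by (simp add: power2_eq_square algebra_simps)
  moreover have "t^2 * G n n \<le> 0" using gnn by (simp add: mult_nonneg_nonpos)
  ultimately show False using u(3) by simp
qed

lemma maxiso_perp:
  fixes G :: "'v::euclidean_space \<Rightarrow> 'v \<Rightarrow> real"
  assumes F: "subspace F" and bl: "bilin_on F G"
    and P: "subspace P" "P \<subseteq> F" and N: "subspace N" "N \<subseteq> F"
    and FPN: "F = {p + n |p n. p \<in> P \<and> n \<in> N}"
    and posP: "\<forall>p\<in>P. p \<noteq> 0 \<longrightarrow> G p p > 0"
    and negN: "\<forall>n\<in>N. n \<noteq> 0 \<longrightarrow> G n n < 0" and dimPN: "dim P = dim N"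
    and L: "subspace L" "L \<subseteq> F" "\<forall>a\<in>L. \<forall>b\<in>L. G a b = 0"
    and max: "\<forall>W. subspace W \<and> L \<subseteq> W \<and> W \<subseteq> F \<and> (\<forall>a\<in>W. \<forall>b\<in>W. G a b = 0) \<longrightarrow> W = L"
    and u: "u \<in> F" "\<forall>l\<in>L. G l u = 0"
  shows "u \<in> L"
proof (rule ccontr)
  assume uL: "u \<notin> L"
  have "G u u \<noteq> 0" using iso_ext_mem[OF F bl L max u] uL by blast
  then consider "G u u > 0" | "G u u < 0" by linarith
  then show False
  proof cases
    case 1 then show False using maxiso_core[OF F bl P N FPN negN dimPN L max u(1,2)] by blast
  next
    case 2
    have FNP: "F = {p + n |p n. p \<in> N \<and> n \<in> P}" using FPN by (auto simp: add.commute) (metis add.commute)+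
    have L': "\<forall>a\<in>L. \<forall>b\<in>L. - G a b = 0" using L by simp
    have max': "\<forall>W. subspace W \<and> L \<subseteq> W \<and> W \<subseteq> F \<and> (\<forall>a\<in>W. \<forall>b\<in>W. - G a b = 0) \<longrightarrow> W = L"
      using max by simp
    show False using maxiso_core[OF F bl_neg[OF bl] N P FNP _ dimPN[symmetric] L(1,2) L' max' u(1)] posP u(2) 2
      by auto
  qed
qed


lemma bl_zero1': "bilin_on F G \<Longrightarrow> 0 \<in> F \<Longrightarrow> w\<in>F \<Longrightarrow> G 0 w = 0"
  by (metis bl_scale1 scale_zero_left mult_zero_left)
lemma bl_zero2': "bilin_on F G \<Longrightarrow> 0 \<in> F \<Longrightarrow> w\<in>F \<Longrightarrow> G w 0 = 0"
  by (metis bl_zero1' bl_sym)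

lemma FibI: "s \<in> Sec \<Longrightarrow> s x \<in> Fib Sec x"
  unfolding Fib_def by blast


lemma ca_fm: "courant_algebroid Fn Sec g rho br Dop \<Longrightarrow> fibre_metric Fn Sec g"
  unfolding courant_algebroid_def by (elim conjE)
lemma ca_fa: "courant_algebroid Fn Sec g rho br Dop \<Longrightarrow> function_algebra Fn"
  unfolding courant_algebroid_def by (elim conjE)
lemma ca_sm: "courant_algebroid Fn Sec g rho br Dop \<Longrightarrow> section_module Fn Sec"
  unfolding courant_algebroid_def by (elim conjE)
lemma ca_rho0: "courant_algebroid Fn Sec g rho br Dop \<Longrightarrow> (\<forall>\<phi>\<in>Sec. \<forall>c. rho \<phi> (fconst c) = fconst 0)"
  unfolding courant_algebroid_def by (elim conjE)
lemma ca_brlin: "courant_algebroid Fn Sec g rho br Dop \<Longrightarrow> (\<forall>\<phi>\<in>Sec. \<forall>\<psi>\<in>Sec. \<forall>\<theta>\<in>Sec.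
        br (sadd \<phi> \<psi>) \<theta> = sadd (br \<phi> \<theta>) (br \<psi> \<theta>) \<and>
        br \<theta> (sadd \<phi> \<psi>) = sadd (br \<theta> \<phi>) (br \<theta> \<psi>))"
  unfolding courant_algebroid_def by (elim conjE)
lemma ca_brSec: "courant_algebroid Fn Sec g rho br Dop \<Longrightarrow> (\<forall>\<phi>\<in>Sec. \<forall>\<psi>\<in>Sec. br \<phi> \<psi> \<in> Sec)"
  unfolding courant_algebroid_def by (elim conjE)
lemma ca_Dop: "courant_algebroid Fn Sec g rho br Dop \<Longrightarrow> (\<forall>f\<in>Fn. Dop f \<in> Sec \<and> (\<forall>\<phi>\<in>Sec. pr g (Dop f) \<phi> = rho \<phi> f))"
  unfolding courant_algebroid_def by (elim conjE)

lemma ca_bilin: "courant_algebroid Fn Sec g rho br Dop \<Longrightarrow> bilin_on (Fib Sec x) (g x)"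
  using ca_fm unfolding fibre_metric_def bilin_on_def by blast

lemma ca_szero: "courant_algebroid Fn Sec g rho br Dop \<Longrightarrow> szero \<in> Sec"
  using ca_sm unfolding section_module_def by blast

lemma zero_Fib: "courant_algebroid Fn Sec g rho br Dop \<Longrightarrow> (0::'v::euclidean_space) \<in> Fib Sec x"
  using FibI[OF ca_szero] unfolding szero_def by metis

lemma ca_g0: "courant_algebroid Fn Sec g rho br Dop \<Longrightarrow> v \<in> Fib Sec x \<Longrightarrow> g x 0 v = 0"
  using bl_zero1'[OF ca_bilin zero_Fib] by metis
lemma ca_g0': "courant_algebroid Fn Sec g rho br Dop \<Longrightarrow> v \<in> Fib Sec x \<Longrightarrow> g x v 0 = 0"
  using bl_zero2'[OF ca_bilin zero_Fib] by metis

lemma ca_nondeg: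
  assumes "courant_algebroid Fn Sec g rho br Dop" "u \<in> Fib Sec x" "\<forall>\<phi>\<in>Sec. g x (\<phi> x) u = 0"
  shows "u = 0"
proof -
  have fm: "fibre_metric Fn Sec g" using ca_fm[OF assms(1)] .
  have "\<forall>v\<in>Fib Sec x. g x u v = 0"
  proof
    fix v assume v: "v \<in> Fib Sec x"
    then obtain \<phi> where "\<phi> \<in> Sec" "v = \<phi> x" unfolding Fib_def by blast
    then show "g x u v = 0" using assms(3) bl_sym[OF ca_bilin[OF assms(1)] v assms(2)] by simp
  qed
  then show ?thesis using fm assms(2) unfolding fibre_metric_def by blast
qed

lemma ca_fconst0: "courant_algebroid Fn Sec g rho br Dop \<Longrightarrow> fconst 0 \<in> Fn"
  using ca_fa unfolding function_algebra_def by blast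

lemma ca_Dop0:
  assumes ca: "courant_algebroid Fn Sec g rho br Dop"
  shows "Dop (fconst 0) x = 0"
proof -
  have f0: "fconst 0 \<in> Fn" using ca_fconst0[OF ca] .
  have D: "Dop (fconst 0) \<in> Sec" "\<forall>\<phi>\<in>Sec. pr g (Dop (fconst 0)) \<phi> = rho \<phi> (fconst 0)"
    using ca_Dop[OF ca] f0 by blast+
  have rz: "\<forall>\<phi>\<in>Sec. rho \<phi> (fconst 0) = fconst 0" using ca_rho0[OF ca] by blast
  have "\<forall>\<phi>\<in>Sec. g x (\<phi> x) (Dop (fconst 0) x) = 0"
  proof
    fix \<phi> assume p: "\<phi> \<in> Sec"
    have "g x (Dop (fconst 0) x) (\<phi> x) = 0" using D(2) rz p
      unfolding pr_def fconst_def by metis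
    then show "g x (\<phi> x) (Dop (fconst 0) x) = 0"
      using bl_sym[OF ca_bilin[OF ca] FibI[OF D(1)] FibI[OF p]] by simp
  qed
  then show ?thesis using ca_nondeg[OF ca FibI[OF D(1)]] by blast
qed

lemma sadd_szero: "sadd szero szero = (szero :: 'm \<Rightarrow> 'v::real_vector)"
  unfolding sadd_def szero_def by simp

lemma self_double_zero: "(y::'v::real_vector) = y + y \<Longrightarrow> y = 0"
  by (metis add_cancel_left_right)

lemma ca_br0:
  assumes ca: "courant_algebroid Fn Sec g rho br Dop" and t: "\<theta> \<in> Sec"
  shows "br \<theta> szero = szero" "br szero \<theta> = szero"
proof -
  have z: "szero \<in> Sec" using ca_szero[OF ca] .
  have bi: "\<forall>\<phi>\<in>Sec. \<forall>\<psi>\<in>Sec. \<forall>\<theta>\<in>Sec.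
        br (sadd \<phi> \<psi>) \<theta> = sadd (br \<phi> \<theta>) (br \<psi> \<theta>) \<and>
        br \<theta> (sadd \<phi> \<psi>) = sadd (br \<theta> \<phi>) (br \<theta> \<psi>)" using ca_brlin[OF ca] .
  have "br \<theta> szero = sadd (br \<theta> szero) (br \<theta> szero)" using bi z t sadd_szero by metis
  then show "br \<theta> szero = szero" unfolding sadd_def szero_def
    by (metis self_double_zero)
  have "br szero \<theta> = sadd (br szero \<theta>) (br szero \<theta>)" using bi z t sadd_szero by metis
  then show "br szero \<theta> = szero" unfolding sadd_def szero_def
    by (metis self_double_zero)
qed

lemma mc_zero:
  assumes mc: "metric_connection Fn Sec1 rho1 Dop1 Sec2 g2 nab"
    and z1: "szero \<in> Sec1" and z2: "szero \<in> Sec2"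
  shows "nab szero szero = szero"
proof -
  have "nab (sadd szero szero) szero = sadd (nab szero szero) (nab szero szero)"
    using mc z1 z2 unfolding metric_connection_def by blast
  then have "nab szero szero = sadd (nab szero szero) (nab szero szero)" by (simp add: sadd_szero)
  then show ?thesis unfolding sadd_def szero_def by (metis self_double_zero)
qed

lemma mc_zero2:
  assumes mc: "metric_connection Fn Sec1 rho1 Dop1 Sec2 g2 nab"
    and a: "a \<in> Sec1" and z2: "szero \<in> Sec2"
  shows "nab a szero = szero"
proof -
  have "nab a (sadd szero szero) = sadd (nab a szero) (nab a szero)"
    using mc a z2 unfolding metric_connection_def by blast
  then have "nab a szero = sadd (nab a szero) (nab a szero)" by (simp add: sadd_szero)
  then show ?thesis unfolding sadd_def szero_def by (metis self_double_zero)
qed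

lemma mc_Sec: "metric_connection Fn Sec1 rho1 Dop1 Sec2 g2 nab \<Longrightarrow> a \<in> Sec1 \<Longrightarrow> \<alpha> \<in> Sec2 \<Longrightarrow> nab a \<alpha> \<in> Sec2"
  unfolding metric_connection_def by blast

lemma cf_Sec: "curv_form Sec1 g1 Sec2 g2 nab Om \<Longrightarrow> a \<in> Sec1 \<Longrightarrow> b \<in> Sec1 \<Longrightarrow> Om a b \<in> Sec2"
  unfolding curv_form_def by blast

lemma cf_eq: "curv_form Sec1 g1 Sec2 g2 nab Om \<Longrightarrow> a \<in> Sec1 \<Longrightarrow> b \<in> Sec1 \<Longrightarrow> \<gamma> \<in> Sec2 \<Longrightarrow>
   g2 x (\<gamma> x) (Om a b x) = (1/2) * (g1 x (nab \<gamma> a x) (b x) - g1 x (a x) (nab \<gamma> b x))"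
  unfolding curv_form_def pr_def by metis

lemma cf_zero:
  assumes cf: "curv_form Sec1 g1 Sec2 g2 nab Om"
    and ca1: "courant_algebroid Fn Sec1 g1 rho1 br1 Dop1"
    and ca2: "courant_algebroid Fn Sec2 g2 rho2 br2 Dop2"
    and mc: "metric_connection Fn Sec2 rho2 Dop2 Sec1 g1 nab"
    and a: "a \<in> Sec1"
  shows "Om a szero x = 0" "Om szero a x = 0"
proof -
  have z1: "szero \<in> Sec1" using ca_szero[OF ca1] .
  have z2: "szero \<in> Sec2" using ca_szero[OF ca2] .
  have "\<forall>\<gamma>\<in>Sec2. g2 x (\<gamma> x) (Om a szero x) = 0"
  proof
    fix \<gamma> assume g: "\<gamma> \<in> Sec2"
    have "nab \<gamma> szero = szero" using mc_zero2[OF mc g z1] .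
    moreover have "nab \<gamma> a \<in> Sec1" using mc_Sec[OF mc g a] .
    ultimately show "g2 x (\<gamma> x) (Om a szero x) = 0"
      using cf_eq[OF cf a z1 g, of x] ca_g0'[OF ca1 FibI] a unfolding szero_def by simp
  qed
  then show "Om a szero x = 0" using ca_nondeg[OF ca2 FibI[OF cf_Sec[OF cf a z1]]] by blast
  have "\<forall>\<gamma>\<in>Sec2. g2 x (\<gamma> x) (Om szero a x) = 0"
  proof
    fix \<gamma> assume g: "\<gamma> \<in> Sec2"
    have "nab \<gamma> szero = szero" using mc_zero2[OF mc g z1] .
    moreover have "nab \<gamma> a \<in> Sec1" using mc_Sec[OF mc g a] .
    ultimately show "g2 x (\<gamma> x) (Om szero a x) = 0"
      using cf_eq[OF cf z1 a g, of x] ca_g0'[OF ca1 FibI] ca_g0[OF ca1 FibI] a unfolding szero_def by simp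
  qed
  then show "Om szero a x = 0" using ca_nondeg[OF ca2 FibI[OF cf_Sec[OF cf z1 a]]] by blast
qed

lemma split_subspace:
  assumes "split_signature Sec g"
  shows "subspace (Fib Sec x)"
proof -
  obtain P N where "subspace P" "subspace N" "Fib Sec x = {p + n | p n. p \<in> P \<and> n \<in> N}"
    using assms unfolding split_signature_def by blast
  then show ?thesis using subspace_sums by simp
qed

lemma ds_parts:
  assumes "dirac_structure Sec g br D"
  shows "\<forall>x. subspace (D x) \<and> D x \<subseteq> Fib Sec x" "\<forall>x. \<forall>v\<in>D x. \<exists>s\<in>Gam Sec D. s x = v"
     "\<forall>x. isotropic_at g x (D x)" "\<forall>s\<in>Gam Sec D. \<forall>t\<in>Gam Sec D. br s t \<in> Gam Sec D"
     "\<forall>x. (\<forall>W. subspace W \<and> D x \<subseteq> W \<and> W \<subseteq> Fib Sec x \<and> isotropic_at g x W \<longrightarrow> W = D x)"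
  using assms unfolding dirac_structure_def by (elim conjE; simp)+

lemma dirac_perp:
  assumes ca: "courant_algebroid Fn Sec g rho br Dop" and ss: "split_signature Sec g"
    and ds: "dirac_structure Sec g br D"
    and u: "u \<in> Fib Sec x" "\<forall>d\<in>D x. g x d u = 0"
  shows "u \<in> D x"
proof -
  obtain P N where PN: "subspace P" "subspace N" "P \<subseteq> Fib Sec x" "N \<subseteq> Fib Sec x"
        "Fib Sec x = {p + n | p n. p \<in> P \<and> n \<in> N}"
        "\<forall>p\<in>P. p \<noteq> 0 \<longrightarrow> g x p p > 0"
        "\<forall>n\<in>N. n \<noteq> 0 \<longrightarrow> g x n n < 0" "dim P = dim N"
    using ss[unfolded split_signature_def, rule_format, of x] by (elim exE conjE) blast
  have L: "subspace (D x)" "D x \<subseteq> Fib Sec x" "\<forall>a\<in>D x. \<forall>b\<in>D x. g x a b = 0"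
    and max: "\<forall>W. subspace W \<and> D x \<subseteq> W \<and> W \<subseteq> Fib Sec x \<and> (\<forall>a\<in>W. \<forall>b\<in>W. g x a b = 0) \<longrightarrow> W = D x"
    using ds_parts(1,3,5)[OF ds] unfolding isotropic_at_def by simp_all
  show ?thesis
    using maxiso_perp[OF split_subspace[OF ss] ca_bilin[OF ca] PN(1,3,2,4,5,6,7,8) L max u] .
qed

definition spair :: "('m \<Rightarrow> 'v) \<Rightarrow> ('m \<Rightarrow> 'w) \<Rightarrow> 'm \<Rightarrow> 'v \<times> 'w" where
  "spair a b = (\<lambda>x. (a x, b x))"

lemma sfst_spair[simp]: "sfst (spair a b) = a" unfolding sfst_def spair_def by simp
lemma ssnd_spair[simp]: "ssnd (spair a b) = b" unfolding ssnd_def spair_def by simp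
lemma spair_msum: "a \<in> S1 \<Longrightarrow> b \<in> S2 \<Longrightarrow> spair a b \<in> msum_sec S1 S2"
  unfolding msum_sec_def by simp

theorem mainTheorem13:
  fixes Fn :: "('m \<Rightarrow> real) set"
    and Sec1 :: "('m \<Rightarrow> 'v::euclidean_space) set" and g1 :: "'m \<Rightarrow> 'v \<Rightarrow> 'v \<Rightarrow> real"
    and rho1 :: "('m \<Rightarrow> 'v) \<Rightarrow> ('m \<Rightarrow> real) \<Rightarrow> ('m \<Rightarrow> real)"
    and br1 :: "('m \<Rightarrow> 'v) \<Rightarrow> ('m \<Rightarrow> 'v) \<Rightarrow> ('m \<Rightarrow> 'v)"
    and Dop1 :: "('m \<Rightarrow> real) \<Rightarrow> ('m \<Rightarrow> 'v)"
    and Sec2 :: "('m \<Rightarrow> 'w::euclidean_space) set" and g2 :: "'m \<Rightarrow> 'w \<Rightarrow> 'w \<Rightarrow> real"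
    and rho2 :: "('m \<Rightarrow> 'w) \<Rightarrow> ('m \<Rightarrow> real) \<Rightarrow> ('m \<Rightarrow> real)"
    and br2 :: "('m \<Rightarrow> 'w) \<Rightarrow> ('m \<Rightarrow> 'w) \<Rightarrow> ('m \<Rightarrow> 'w)"
    and Dop2 :: "('m \<Rightarrow> real) \<Rightarrow> ('m \<Rightarrow> 'w)"
    and nabR :: "('m \<Rightarrow> 'v) \<Rightarrow> ('m \<Rightarrow> 'w) \<Rightarrow> ('m \<Rightarrow> 'w)"
    and nabL :: "('m \<Rightarrow> 'w) \<Rightarrow> ('m \<Rightarrow> 'v) \<Rightarrow> ('m \<Rightarrow> 'v)"
    and Om :: "('m \<Rightarrow> 'v) \<Rightarrow> ('m \<Rightarrow> 'v) \<Rightarrow> ('m \<Rightarrow> 'w)"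
    and Mh :: "('m \<Rightarrow> 'w) \<Rightarrow> ('m \<Rightarrow> 'w) \<Rightarrow> ('m \<Rightarrow> 'v)"
    and D1 :: "'m \<Rightarrow> 'v set" and D2 :: "'m \<Rightarrow> 'w set"
  assumes "matched_pair Fn Sec1 g1 rho1 br1 Dop1 Sec2 g2 rho2 br2 Dop2 nabR nabL Om Mh"
    and "split_signature Sec1 g1" and "split_signature Sec2 g2"
    and "dirac_structure Sec1 g1 br1 D1" and "dirac_structure Sec2 g2 br2 D2"
  shows "dirac_structure (msum_sec Sec1 Sec2) (msum_g g1 g2)
           (msum_br g1 br1 Dop1 g2 br2 Dop2 nabR nabL Om Mh) (\<lambda>x. D1 x \<times> D2 x)
         \<longleftrightarrow> (\<forall>\<alpha>\<in>Gam Sec2 D2. \<forall>a\<in>Gam Sec1 D1.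
                 nabL \<alpha> a \<in> Gam Sec1 D1 \<and> nabR a \<alpha> \<in> Gam Sec2 D2)"
proof -
  have ca1: "courant_algebroid Fn Sec1 g1 rho1 br1 Dop1" using assms(1) unfolding matched_pair_def by (elim conjE)
  have ca2: "courant_algebroid Fn Sec2 g2 rho2 br2 Dop2" using assms(1) unfolding matched_pair_def by (elim conjE)
  have mcR: "metric_connection Fn Sec1 rho1 Dop1 Sec2 g2 nabR" using assms(1) unfolding matched_pair_def by (elim conjE)
  have mcL: "metric_connection Fn Sec2 rho2 Dop2 Sec1 g1 nabL" using assms(1) unfolding matched_pair_def by (elim conjE)
  have cfL: "curv_form Sec1 g1 Sec2 g2 nabL Om" using assms(1) unfolding matched_pair_def by (elim conjE)
  have cfR: "curv_form Sec2 g2 Sec1 g1 nabR Mh" using assms(1) unfolding matched_pair_def by (elim conjE)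
  have caS: "courant_algebroid Fn (msum_sec Sec1 Sec2) (msum_g g1 g2) (msum_rho rho1 rho2)
        (msum_br g1 br1 Dop1 g2 br2 Dop2 nabR nabL Om Mh) (msum_D Dop1 Dop2)"
    using assms(1) unfolding matched_pair_def by (elim conjE)
  have ds1: "\<forall>x. subspace (D1 x) \<and> D1 x \<subseteq> Fib Sec1 x" "\<forall>x. \<forall>v\<in>D1 x. \<exists>s\<in>Gam Sec1 D1. s x = v"
     "\<forall>x. isotropic_at g1 x (D1 x)" "\<forall>s\<in>Gam Sec1 D1. \<forall>t\<in>Gam Sec1 D1. br1 s t \<in> Gam Sec1 D1"
    using ds_parts[OF assms(4)] by auto
  have ds2: "\<forall>x. subspace (D2 x) \<and> D2 x \<subseteq> Fib Sec2 x" "\<forall>x. \<forall>v\<in>D2 x. \<exists>s\<in>Gam Sec2 D2. s x = v"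
     "\<forall>x. isotropic_at g2 x (D2 x)" "\<forall>s\<in>Gam Sec2 D2. \<forall>t\<in>Gam Sec2 D2. br2 s t \<in> Gam Sec2 D2"
    using ds_parts[OF assms(5)] by auto
  have z1: "szero \<in> Sec1" using ca_szero[OF ca1] .
  have z2: "szero \<in> Sec2" using ca_szero[OF ca2] .
  have D10: "0 \<in> D1 x" for x using ds1(1) subspace_0 by blast
  have D20: "0 \<in> D2 x" for x using ds2(1) subspace_0 by blast
  have brval: "msum_br g1 br1 Dop1 g2 br2 Dop2 nabR nabL Om Mh s t x =
     (br1 (sfst s) (sfst t) x + nabL (ssnd s) (sfst t) x - nabL (ssnd t) (sfst s) x + Mh (ssnd s) (ssnd t) x
               + (1/2) *\<^sub>R Dop1 (pr g2 (ssnd s) (ssnd t)) x,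
      br2 (ssnd s) (ssnd t) x + nabR (sfst s) (ssnd t) x - nabR (sfst t) (ssnd s) x + Om (sfst s) (sfst t) x
               + (1/2) *\<^sub>R Dop2 (pr g1 (sfst s) (sfst t)) x)" for s t x
    unfolding msum_br_def Let_def by simp
  show ?thesis
  proof
    assume dS: "dirac_structure (msum_sec Sec1 Sec2) (msum_g g1 g2)
           (msum_br g1 br1 Dop1 g2 br2 Dop2 nabR nabL Om Mh) (\<lambda>x. D1 x \<times> D2 x)"
    have brcS: "\<forall>s\<in>Gam (msum_sec Sec1 Sec2) (\<lambda>x. D1 x \<times> D2 x). \<forall>t\<in>Gam (msum_sec Sec1 Sec2) (\<lambda>x. D1 x \<times> D2 x).
        msum_br g1 br1 Dop1 g2 br2 Dop2 nabR nabL Om Mh s t \<in> Gam (msum_sec Sec1 Sec2) (\<lambda>x. D1 x \<times> D2 x)"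
      using ds_parts(4)[OF dS] .
    show "\<forall>\<alpha>\<in>Gam Sec2 D2. \<forall>a\<in>Gam Sec1 D1. nabL \<alpha> a \<in> Gam Sec1 D1 \<and> nabR a \<alpha> \<in> Gam Sec2 D2"
    proof (intro ballI)
      fix \<alpha> a assume al: "\<alpha> \<in> Gam Sec2 D2" and a: "a \<in> Gam Sec1 D1"
      have aS: "a \<in> Sec1" "\<forall>x. a x \<in> D1 x" using a unfolding Gam_def by auto
      have alS: "\<alpha> \<in> Sec2" "\<forall>x. \<alpha> x \<in> D2 x" using al unfolding Gam_def by auto
      have sG: "spair a szero \<in> Gam (msum_sec Sec1 Sec2) (\<lambda>x. D1 x \<times> D2 x)"
        unfolding Gam_def using spair_msum[OF aS(1) z2] aS(2) D20 by (simp add: spair_def szero_def)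
      have tG: "spair szero \<alpha> \<in> Gam (msum_sec Sec1 Sec2) (\<lambda>x. D1 x \<times> D2 x)"
        unfolding Gam_def using spair_msum[OF z1 alS(1)] alS(2) D10 by (simp add: spair_def szero_def)
      have r: "msum_br g1 br1 Dop1 g2 br2 Dop2 nabR nabL Om Mh (spair a szero) (spair szero \<alpha>)
          \<in> Gam (msum_sec Sec1 Sec2) (\<lambda>x. D1 x \<times> D2 x)" using brcS sG tG by blast
      have p1: "pr g2 szero \<alpha> = fconst 0"
        unfolding pr_def fconst_def szero_def using ca_g0[OF ca2 FibI[OF alS(1)]] by simp
      have p2: "pr g1 a szero = fconst 0"
        unfolding pr_def fconst_def szero_def using ca_g0'[OF ca1 FibI[OF aS(1)]] by simp
      have e: "msum_br g1 br1 Dop1 g2 br2 Dop2 nabR nabL Om Mh (spair a szero) (spair szero \<alpha>) x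
          = (- nabL \<alpha> a x, nabR a \<alpha> x)" for x
        unfolding brval sfst_spair ssnd_spair p1 p2
        using ca_br0[OF ca1 aS(1)] ca_br0[OF ca2 alS(1)] mc_zero[OF mcL z2 z1] mc_zero[OF mcR z1 z2]
          cf_zero[OF cfR ca2 ca1 mcR alS(1)] cf_zero[OF cfL ca1 ca2 mcL aS(1)] ca_Dop0[OF ca1] ca_Dop0[OF ca2]
        by (simp add: szero_def)
      have rr: "(- nabL \<alpha> a x, nabR a \<alpha> x) \<in> D1 x \<times> D2 x" for x
        using r e[of x] unfolding Gam_def by (metis (mono_tags, lifting) mem_Collect_eq)
      have n1: "nabL \<alpha> a x \<in> D1 x" for x
      proof -
        have "- nabL \<alpha> a x \<in> D1 x" using rr[of x] by simp
        then have "- (- nabL \<alpha> a x) \<in> D1 x" using ds1(1) subspace_neg by blast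
        then show ?thesis by simp
      qed
      have n2: "nabR a \<alpha> x \<in> D2 x" for x using rr[of x] by simp
      show "nabL \<alpha> a \<in> Gam Sec1 D1 \<and> nabR a \<alpha> \<in> Gam Sec2 D2"
        unfolding Gam_def using mc_Sec[OF mcL alS(1) aS(1)] mc_Sec[OF mcR aS(1) alS(1)] n1 n2 by blast
    qed
  next
    assume H: "\<forall>\<alpha>\<in>Gam Sec2 D2. \<forall>a\<in>Gam Sec1 D1. nabL \<alpha> a \<in> Gam Sec1 D1 \<and> nabR a \<alpha> \<in> Gam Sec2 D2"
    have c1: "\<forall>x. subspace (D1 x \<times> D2 x) \<and> D1 x \<times> D2 x \<subseteq> Fib (msum_sec Sec1 Sec2) x"
    proof
      fix x
      have s1: "subspace (D1 x)" "D1 x \<subseteq> Fib Sec1 x" using ds1(1) by auto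
      have s2: "subspace (D2 x)" "D2 x \<subseteq> Fib Sec2 x" using ds2(1) by auto
      have "subspace (D1 x \<times> D2 x)" using subspace_Times[OF s1(1) s2(1)] .
      moreover have "D1 x \<times> D2 x \<subseteq> Fib (msum_sec Sec1 Sec2) x"
      proof
        fix p assume p: "p \<in> D1 x \<times> D2 x"
        have "fst p \<in> Fib Sec1 x" using p s1(2) by auto
        then obtain s where s: "s \<in> Sec1" "fst p = s x" unfolding Fib_def by blast
        have "snd p \<in> Fib Sec2 x" using p s2(2) by auto
        then obtain t where t: "t \<in> Sec2" "snd p = t x" unfolding Fib_def by blast
        have "p = spair s t x" using s t by (simp add: spair_def prod_eq_iff)
        moreover have "spair s t \<in> msum_sec Sec1 Sec2" using spair_msum[OF s(1) t(1)] .
        ultimately show "p \<in> Fib (msum_sec Sec1 Sec2) x" unfolding Fib_def by blast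
      qed
      ultimately show "subspace (D1 x \<times> D2 x) \<and> D1 x \<times> D2 x \<subseteq> Fib (msum_sec Sec1 Sec2) x" by blast
    qed
    have c2: "\<forall>x. \<forall>v\<in>D1 x \<times> D2 x. \<exists>s\<in>Gam (msum_sec Sec1 Sec2) (\<lambda>x. D1 x \<times> D2 x). s x = v"
    proof (intro allI ballI)
      fix x v assume v: "v \<in> D1 x \<times> D2 x"
      obtain s where s: "s \<in> Gam Sec1 D1" "s x = fst v" using ds1(2) v by force
      obtain t where t: "t \<in> Gam Sec2 D2" "t x = snd v" using ds2(2) v by force
      have "spair s t \<in> Gam (msum_sec Sec1 Sec2) (\<lambda>x. D1 x \<times> D2 x)"
        using s t spair_msum unfolding Gam_def spair_def by auto
      moreover have "spair s t x = v" using s t by (simp add: spair_def)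
      ultimately show "\<exists>s\<in>Gam (msum_sec Sec1 Sec2) (\<lambda>x. D1 x \<times> D2 x). s x = v" by blast
    qed
    have c3: "\<forall>x. isotropic_at (msum_g g1 g2) x (D1 x \<times> D2 x) \<and>
          (\<forall>W. subspace W \<and> D1 x \<times> D2 x \<subseteq> W \<and> W \<subseteq> Fib (msum_sec Sec1 Sec2) x \<and>
               isotropic_at (msum_g g1 g2) x W \<longrightarrow> W = D1 x \<times> D2 x)"
    proof (intro allI conjI impI)
      fix x
      show "isotropic_at (msum_g g1 g2) x (D1 x \<times> D2 x)"
        using ds1(3) ds2(3) unfolding isotropic_at_def msum_g_def by auto
      fix W assume W: "subspace W \<and> D1 x \<times> D2 x \<subseteq> W \<and> W \<subseteq> Fib (msum_sec Sec1 Sec2) x \<and>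
               isotropic_at (msum_g g1 g2) x W"
      have "W \<subseteq> D1 x \<times> D2 x"
      proof
        fix p assume pW: "p \<in> W"
        obtain u v where p: "p = (u, v)" by fastforce
        obtain s where s: "s \<in> msum_sec Sec1 Sec2" "s x = p" using W pW unfolding Fib_def by blast
        have uF: "u \<in> Fib Sec1 x" using s p unfolding msum_sec_def sfst_def Fib_def
          by (metis (mono_tags, lifting) fst_conv image_eqI mem_Collect_eq)
        have vF: "v \<in> Fib Sec2 x" using s p unfolding msum_sec_def ssnd_def Fib_def
          by (metis (mono_tags, lifting) snd_conv image_eqI mem_Collect_eq)
        have "\<forall>d\<in>D1 x. g1 x d u = 0"
        proof
          fix d assume d: "d \<in> D1 x"
          have "(d, 0) \<in> W" using W d D20 by blast
          then have "msum_g g1 g2 x (d, 0) p = 0" using W pW unfolding isotropic_at_def by blast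
          then show "g1 x d u = 0" using ca_g0[OF ca2 vF] unfolding msum_g_def p by simp
        qed
        then have "u \<in> D1 x" using dirac_perp[OF ca1 assms(2) assms(4) uF] by blast
        have "\<forall>d\<in>D2 x. g2 x d v = 0"
        proof
          fix d assume d: "d \<in> D2 x"
          have "(0, d) \<in> W" using W d D10 by blast
          then have "msum_g g1 g2 x (0, d) p = 0" using W pW unfolding isotropic_at_def by blast
          then show "g2 x d v = 0" using ca_g0[OF ca1 uF] unfolding msum_g_def p by simp
        qed
        then have "v \<in> D2 x" using dirac_perp[OF ca2 assms(3) assms(5) vF] by blast
        then show "p \<in> D1 x \<times> D2 x" using \<open>u \<in> D1 x\<close> p by simp
      qed
      then show "W = D1 x \<times> D2 x" using W by blast
    qed
    have c4: "\<forall>s\<in>Gam (msum_sec Sec1 Sec2) (\<lambda>x. D1 x \<times> D2 x). \<forall>t\<in>Gam (msum_sec Sec1 Sec2) (\<lambda>x. D1 x \<times> D2 x).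
        msum_br g1 br1 Dop1 g2 br2 Dop2 nabR nabL Om Mh s t \<in> Gam (msum_sec Sec1 Sec2) (\<lambda>x. D1 x \<times> D2 x)"
    proof (intro ballI)
      fix s t assume s: "s \<in> Gam (msum_sec Sec1 Sec2) (\<lambda>x. D1 x \<times> D2 x)"
        and t: "t \<in> Gam (msum_sec Sec1 Sec2) (\<lambda>x. D1 x \<times> D2 x)"
      define a where "a = sfst s"
      define \<alpha> where "\<alpha> = ssnd s"
      define b where "b = sfst t"
      define \<beta> where "\<beta> = ssnd t"
      have sS: "s \<in> msum_sec Sec1 Sec2" and tS: "t \<in> msum_sec Sec1 Sec2" using s t unfolding Gam_def by auto
      have aG: "a \<in> Gam Sec1 D1" using s unfolding Gam_def msum_sec_def a_def sfst_def
        by (auto simp: mem_Times_iff)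
      have bG: "b \<in> Gam Sec1 D1" using t unfolding Gam_def msum_sec_def b_def sfst_def
        by (auto simp: mem_Times_iff)
      have alG: "\<alpha> \<in> Gam Sec2 D2" using s unfolding Gam_def msum_sec_def \<alpha>_def ssnd_def
        by (auto simp: mem_Times_iff)
      have beG: "\<beta> \<in> Gam Sec2 D2" using t unfolding Gam_def msum_sec_def \<beta>_def ssnd_def
        by (auto simp: mem_Times_iff)
      have aS: "a \<in> Sec1" "b \<in> Sec1" "\<alpha> \<in> Sec2" "\<beta> \<in> Sec2" using aG bG alG beG unfolding Gam_def by auto
      have inS: "msum_br g1 br1 Dop1 g2 br2 Dop2 nabR nabL Om Mh s t \<in> msum_sec Sec1 Sec2"
        using ca_brSec[OF caS] sS tS by blast
      have mem1: "\<forall>x. y x \<in> D1 x" if "y \<in> Gam Sec1 D1" for y using that unfolding Gam_def by blast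
      have mem2: "\<forall>x. y x \<in> D2 x" if "y \<in> Gam Sec2 D2" for y using that unfolding Gam_def by blast
      have pz1: "pr g2 \<alpha> \<beta> = fconst 0" using ds2(3) alG beG unfolding pr_def fconst_def isotropic_at_def Gam_def
        by auto
      have pz2: "pr g1 a b = fconst 0" using ds1(3) aG bG unfolding pr_def fconst_def isotropic_at_def Gam_def
        by auto
      have Mh_in: "Mh \<alpha> \<beta> x \<in> D1 x" for x
      proof -
        have MS: "Mh \<alpha> \<beta> \<in> Sec1" using cf_Sec[OF cfR aS(3,4)] .
        have "\<forall>d\<in>D1 x. g1 x d (Mh \<alpha> \<beta> x) = 0"
        proof
          fix d assume d: "d \<in> D1 x"
          obtain c where c: "c \<in> Gam Sec1 D1" "c x = d" using ds1(2) d by blast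
          have cS: "c \<in> Sec1" using c unfolding Gam_def by auto
          have n1: "nabR c \<alpha> x \<in> D2 x" "nabR c \<beta> x \<in> D2 x" using H alG beG c(1) unfolding Gam_def by blast+
          have "g1 x (c x) (Mh \<alpha> \<beta> x) = (1/2) * (g2 x (nabR c \<alpha> x) (\<beta> x) - g2 x (\<alpha> x) (nabR c \<beta> x))"
            using cf_eq[OF cfR aS(3,4) cS] .
          also have "\<dots> = 0" using ds2(3) n1 mem2[OF alG] mem2[OF beG] unfolding isotropic_at_def by simp
          finally show "g1 x d (Mh \<alpha> \<beta> x) = 0" using c by simp
        qed
        then show ?thesis using dirac_perp[OF ca1 assms(2) assms(4) FibI[OF MS]] by blast
      qed
      have Om_in: "Om a b x \<in> D2 x" for x
      proof -
        have MS: "Om a b \<in> Sec2" using cf_Sec[OF cfL aS(1,2)] .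
        have "\<forall>d\<in>D2 x. g2 x d (Om a b x) = 0"
        proof
          fix d assume d: "d \<in> D2 x"
          obtain c where c: "c \<in> Gam Sec2 D2" "c x = d" using ds2(2) d by blast
          have cS: "c \<in> Sec2" using c unfolding Gam_def by auto
          have n1: "nabL c a x \<in> D1 x" "nabL c b x \<in> D1 x" using H aG bG c(1) unfolding Gam_def by blast+
          have "g2 x (c x) (Om a b x) = (1/2) * (g1 x (nabL c a x) (b x) - g1 x (a x) (nabL c b x))"
            using cf_eq[OF cfL aS(1,2) cS] .
          also have "\<dots> = 0" using ds1(3) n1 mem1[OF aG] mem1[OF bG] unfolding isotropic_at_def by simp
          finally show "g2 x d (Om a b x) = 0" using c by simp
        qed
        then show ?thesis using dirac_perp[OF ca2 assms(3) assms(5) FibI[OF MS]] by blast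
      qed
      have "msum_br g1 br1 Dop1 g2 br2 Dop2 nabR nabL Om Mh s t x \<in> D1 x \<times> D2 x" for x
      proof -
        have sub1: "subspace (D1 x)" and sub2: "subspace (D2 x)" using ds1(1) ds2(1) by auto
        have t1: "br1 a b x \<in> D1 x" using mem1[OF ds1(4)[rule_format, OF aG bG]] by blast
        have t2: "nabL \<alpha> b x \<in> D1 x" "nabL \<beta> a x \<in> D1 x" using H alG beG aG bG mem1 by blast+
        have t3: "(1/2) *\<^sub>R Dop1 (pr g2 \<alpha> \<beta>) x \<in> D1 x" using pz1 ca_Dop0[OF ca1] D10 by simp
        have u1: "br2 \<alpha> \<beta> x \<in> D2 x" using mem2[OF ds2(4)[rule_format, OF alG beG]] by blast
        have u2: "nabR a \<beta> x \<in> D2 x" "nabR b \<alpha> x \<in> D2 x" using H alG beG aG bG mem2 by blast+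
        have u3: "(1/2) *\<^sub>R Dop2 (pr g1 a b) x \<in> D2 x" using pz2 ca_Dop0[OF ca2] D20 by simp
        have "br1 a b x + nabL \<alpha> b x - nabL \<beta> a x + Mh \<alpha> \<beta> x + (1/2) *\<^sub>R Dop1 (pr g2 \<alpha> \<beta>) x \<in> D1 x"
          using sub1 t1 t2 t3 Mh_in[of x] by (intro subspace_add subspace_diff) auto
        moreover have "br2 \<alpha> \<beta> x + nabR a \<beta> x - nabR b \<alpha> x + Om a b x + (1/2) *\<^sub>R Dop2 (pr g1 a b) x \<in> D2 x"
          using sub2 u1 u2 u3 Om_in[of x] by (intro subspace_add subspace_diff) auto
        ultimately show ?thesis unfolding brval a_def b_def \<alpha>_def \<beta>_def by simp
      qed
      then show "msum_br g1 br1 Dop1 g2 br2 Dop2 nabR nabL Om Mh s t \<in> Gam (msum_sec Sec1 Sec2) (\<lambda>x. D1 x \<times> D2 x)"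
        using inS unfolding Gam_def by blast
    qed
    show "dirac_structure (msum_sec Sec1 Sec2) (msum_g g1 g2)
           (msum_br g1 br1 Dop1 g2 br2 Dop2 nabR nabL Om Mh) (\<lambda>x. D1 x \<times> D2 x)"
      unfolding dirac_structure_def using c1 c2 c3 c4 by (intro conjI)
  qed
qed


end
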